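(* Let $\mathbb{C}$ be a locally small category and $\mathbb{C}_{\mathit{fin}}$ a full subcategory satisfying (C1)–(C5) below. Let $F\in\mathrm{Ob}(\mathbb{C})$ be locally finite and let $U:\mathbb{C}^*\to\mathbb{C}$ be a reasonable precompact expansion with unique restrictions which separates points. Then (a) $\mathcal{S}_F=\{N(e,\mathcal{A}):U(\mathcal{A})\in\mathrm{Ob}(\mathbb{C}_{\mathit{fin}}),\ e\in\hom(U(\mathcal{A}),F)\}$ is a base consisting of clopen sets of a topology $\sigma_F$ on $U^{-1}(F)$; and (b) $U^{-1}(F)$ with the topology $\sigma_F$ is a Hausdorff space.
   Context: Write $A\to B$ if $\hom(A,B)\ne\varnothing$. Conditions: (C1) all morphisms of $\mathbb{C}$ are monomorphisms; (C2) $\mathrm{Ob}(\mathbb{C}_{\mathit{fin}})$ is a set; (C3) $\hom(A,B)$ is finite for $A,B\in\mathrm{Ob}(\mathbb{C}_{\mathit{fin}})$; (C4) for every $F\in\mathrm{Ob}(\mathbb{C})$ there is $A\in\mathrm{Ob}(\mathbb{C}_{\mathit{fin}})$ with $A\to F$; (C5) for every $B\in\mathrm{Ob}(\mathbb{C}_{\mathit{fin}})$ the set $\{A\in\mathrm{Ob}(\mathbb{C}_{\mathit{fin}}):A\to B\}$ is finite. $F$ is locally finite if for all $A,B\in\mathrm{Ob}(\mathbb{C}_{\mathit{fin}})$, $e\in\hom(A,F)$, $f\in\hom(B,F)$ there exist $D\in\mathrm{Ob}(\mathbb{C}_{\mathit{fin}})$, $r\in\hom(D,F)$, $p\in\hom(A,D)$,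 $q\in\hom(B,D)$ with $r\cdot p=e$, $r\cdot q=f$, such that for every $H\in\mathrm{Ob}(\mathbb{C})$, $r'\in\hom(H,F)$, $p'\in\hom(A,H)$, $q'\in\hom(B,H)$ with $r'\cdot p'=e$, $r'\cdot q'=f$ there is $s\in\hom(D,H)$ with $r'\cdot s=r$, $s\cdot p=p'$, $s\cdot q=q'$. An expansion of $\mathbb{C}$ is a locally small category $\mathbb{C}^*$ with a functor $U:\mathbb{C}^*\to\mathbb{C}$ surjective on objects and injective on hom-sets; we regard $\hom_{\mathbb{C}^*}(\mathcal{A},\mathcal{B})\subseteq\hom_{\mathbb{C}}(U\mathcal{A},U\mathcal{B})$, and $U^{-1}(A)=\{\mathcal{A}:U(\mathcal{A})=A\}$. $U$ is reasonable if for every $e\in\hom(A,B)$ and $\mathcal{A}\in U^{-1}(A)$ there is $\mathcal{B}\in U^{-1}(B)$ with $e\in\hom(\mathcal{A},\mathcal{B})$; it has unique restrictions if for every $\mathcal{B}\in\mathrm{Ob}(\mathbb{C}^* )$ and $e\in\hom(A,U(\mathcal{B}))$ there is exactly one $\mathcal{A}\in U^{-1}(A)$ with $e\in\hom(\mathcal{A},\mathcal{B})$, denoted $\mathcal{B}|_e$; it is precompact if $U^{-1}(A)$ is a set for every $A\in\mathrm{Ob}(\mathbb{C})$ and finite for $A\in\mathrm{Ob}(\mathbb{C}_{\mathit{fin}})$; it separates points if for every $F\in\mathrm{Ob}(\mathbb{C})$ and all distinct $\mathcal{F}_1,\mathcal{F}_2\in U^{-1}(F)$ there are $A\in\mathrm{Ob}(\mathbb{C}_{\mathit{fin}})$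 and $e\in\hom(A,F)$ with $\mathcal{F}_1|_e\ne\mathcal{F}_2|_e$. For $e\in\hom(A,F)$ and $\mathcal{A}\in U^{-1}(A)$, $N(e,\mathcal{A})=\{\mathcal{F}\in U^{-1}(F):e\in\hom(\mathcal{A},\mathcal{F})\}$. *)

theory Defs
  imports "HOL-Analysis.Analysis"
begin

text \<open>A (locally small) category: objects Ob, hom-sets hom A B, composition
  cmp g f (read g \<cdot> f, first f then g), identities idm.\<close>
definition category :: "'o set \<Rightarrow> ('o \<Rightarrow> 'o \<Rightarrow> 'm set) \<Rightarrow> ('m \<Rightarrow> 'm \<Rightarrow> 'm) \<Rightarrow> ('o \<Rightarrow> 'm) \<Rightarrow> bool" where
  "category Ob hom cmp idm \<longleftrightarrow>
     (\<forall>A B. (A \<notin> Ob \<or> B \<notin> Ob) \<longrightarrow> hom A B = {}) \<and>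
     (\<forall>A\<in>Ob. idm A \<in> hom A A) \<and>
     (\<forall>A B C f g. f \<in> hom A B \<and> g \<in> hom B C \<longrightarrow> cmp g f \<in> hom A C) \<and>
     (\<forall>A B C D f g h. f \<in> hom A B \<and> g \<in> hom B C \<and> h \<in> hom C D \<longrightarrow>
        cmp h (cmp g f) = cmp (cmp h g) f) \<and>
     (\<forall>A B f. f \<in> hom A B \<longrightarrow> cmp (idm B) f = f \<and> cmp f (idm A) = f)"

definition monomorphism :: "'o set \<Rightarrow> ('o \<Rightarrow> 'o \<Rightarrow> 'm set) \<Rightarrow> ('m \<Rightarrow> 'm \<Rightarrow> 'm) \<Rightarrow> 'o \<Rightarrow> 'o \<Rightarrow> 'm \<Rightarrow> bool" where
  "monomorphism Ob hom cmp A B f \<longleftrightarrow> f \<in> hom A B \<and>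
     (\<forall>C\<in>Ob. \<forall>g\<in>hom C A. \<forall>h\<in>hom C A. cmp f g = cmp f h \<longrightarrow> g = h)"

text \<open>Conditions (C1)-(C5) for a full subcategory with object set Obfin.
  (C2) (Ob(C_fin) is a set) holds automatically in HOL.\<close>
definition fin_conditions :: "'o set \<Rightarrow> ('o \<Rightarrow> 'o \<Rightarrow> 'm set) \<Rightarrow> ('m \<Rightarrow> 'm \<Rightarrow> 'm) \<Rightarrow> 'o set \<Rightarrow> bool" where
  "fin_conditions Ob hom cmp Obfin \<longleftrightarrow>
     Obfin \<subseteq> Ob \<and>
     (\<forall>A\<in>Ob. \<forall>B\<in>Ob. \<forall>f\<in>hom A B. monomorphism Ob hom cmp A B f) \<and>
     (\<forall>A\<in>Obfin. \<forall>B\<in>Obfin. finite (hom A B)) \<and>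
     (\<forall>F\<in>Ob. \<exists>A\<in>Obfin. hom A F \<noteq> {}) \<and>
     (\<forall>B\<in>Obfin. finite {A\<in>Obfin. hom A B \<noteq> {}})"

definition locally_finite :: "'o set \<Rightarrow> ('o \<Rightarrow> 'o \<Rightarrow> 'm set) \<Rightarrow> ('m \<Rightarrow> 'm \<Rightarrow> 'm) \<Rightarrow> 'o set \<Rightarrow> 'o \<Rightarrow> bool" where
  "locally_finite Ob hom cmp Obfin F \<longleftrightarrow>
     (\<forall>A\<in>Obfin. \<forall>B\<in>Obfin. \<forall>e\<in>hom A F. \<forall>f\<in>hom B F.
        \<exists>D\<in>Obfin. \<exists>r\<in>hom D F. \<exists>p\<in>hom A D. \<exists>q\<in>hom B D.
          cmp r p = e \<and> cmp r q = f \<and>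
          (\<forall>H\<in>Ob. \<forall>r'\<in>hom H F. \<forall>p'\<in>hom A H. \<forall>q'\<in>hom B H.
             cmp r' p' = e \<and> cmp r' q' = f \<longrightarrow>
             (\<exists>s\<in>hom D H. cmp r' s = r \<and> cmp s p = p' \<and> cmp s q = q')))"

text \<open>Morphisms of C* are identified with their
  U-images (hom* A B \<subseteq> hom (U A) (U B)), so U is injective on hom-sets;
  C* uses the composition of C and identities idm (U A), which makes U a functor.\<close>
definition expansion :: "'o set \<Rightarrow> ('o \<Rightarrow> 'o \<Rightarrow> 'm set) \<Rightarrow> ('m \<Rightarrow> 'm \<Rightarrow> 'm) \<Rightarrow> ('o \<Rightarrow> 'm)
    \<Rightarrow> 'p set \<Rightarrow> ('p \<Rightarrow> 'p \<Rightarrow> 'm set) \<Rightarrow> ('p \<Rightarrow> 'o) \<Rightarrow> bool" where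
  "expansion Ob hom cmp idm Obs homs U \<longleftrightarrow>
     category Obs homs cmp (\<lambda>\<A>. idm (U \<A>)) \<and>
     U ` Obs = Ob \<and>
     (\<forall>\<A> \<B>. homs \<A> \<B> \<subseteq> hom (U \<A>) (U \<B>))"

definition fibre :: "'p set \<Rightarrow> ('p \<Rightarrow> 'o) \<Rightarrow> 'o \<Rightarrow> 'p set" where
  "fibre Obs U A = {\<A>\<in>Obs. U \<A> = A}"

definition reasonable :: "('o \<Rightarrow> 'o \<Rightarrow> 'm set) \<Rightarrow> 'p set \<Rightarrow> ('p \<Rightarrow> 'p \<Rightarrow> 'm set) \<Rightarrow> ('p \<Rightarrow> 'o) \<Rightarrow> bool" where
  "reasonable hom Obs homs U \<longleftrightarrow>
     (\<forall>A B e \<A>. e \<in> hom A B \<and> \<A> \<in> fibre Obs U A \<longrightarrow> (\<exists>\<B>\<in>fibre Obs U B. e \<in> homs \<A> \<B>))"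

definition unique_restrictions :: "('o \<Rightarrow> 'o \<Rightarrow> 'm set) \<Rightarrow> 'p set \<Rightarrow> ('p \<Rightarrow> 'p \<Rightarrow> 'm set) \<Rightarrow> ('p \<Rightarrow> 'o) \<Rightarrow> bool" where
  "unique_restrictions hom Obs homs U \<longleftrightarrow>
     (\<forall>\<B>\<in>Obs. \<forall>A e. e \<in> hom A (U \<B>) \<longrightarrow> (\<exists>!\<A>. \<A> \<in> fibre Obs U A \<and> e \<in> homs \<A> \<B>))"

text \<open>The restriction \<B>|_e (meaningful under unique restrictions).\<close>
definition restr :: "'p set \<Rightarrow> ('p \<Rightarrow> 'p \<Rightarrow> 'm set) \<Rightarrow> ('p \<Rightarrow> 'o) \<Rightarrow> 'o \<Rightarrow> 'p \<Rightarrow> 'm \<Rightarrow> 'p" where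
  "restr Obs homs U A \<B> e = (THE \<A>. \<A> \<in> fibre Obs U A \<and> e \<in> homs \<A> \<B>)"

text \<open>Precompact: fibres over finite objects are finite (fibres are sets automatically).\<close>
definition precompact :: "'o set \<Rightarrow> 'p set \<Rightarrow> ('p \<Rightarrow> 'o) \<Rightarrow> bool" where
  "precompact Obfin Obs U \<longleftrightarrow> (\<forall>A\<in>Obfin. finite (fibre Obs U A))"

definition separates_points :: "'o set \<Rightarrow> ('o \<Rightarrow> 'o \<Rightarrow> 'm set) \<Rightarrow> 'o set \<Rightarrow> 'p set \<Rightarrow> ('p \<Rightarrow> 'p \<Rightarrow> 'm set) \<Rightarrow> ('p \<Rightarrow> 'o) \<Rightarrow> bool" where
  "separates_points Ob hom Obfin Obs homs U \<longleftrightarrow>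
     (\<forall>F\<in>Ob. \<forall>\<F>1\<in>fibre Obs U F. \<forall>\<F>2\<in>fibre Obs U F. \<F>1 \<noteq> \<F>2 \<longrightarrow>
        (\<exists>A\<in>Obfin. \<exists>e\<in>hom A F. restr Obs homs U A \<F>1 e \<noteq> restr Obs homs U A \<F>2 e))"

definition Nbhd :: "'p set \<Rightarrow> ('p \<Rightarrow> 'p \<Rightarrow> 'm set) \<Rightarrow> ('p \<Rightarrow> 'o) \<Rightarrow> 'o \<Rightarrow> 'm \<Rightarrow> 'p \<Rightarrow> 'p set" where
  "Nbhd Obs homs U F e \<A> = {\<F>\<in>fibre Obs U F. e \<in> homs \<A> \<F>}"

definition S_fam :: "('o \<Rightarrow> 'o \<Rightarrow> 'm set) \<Rightarrow> 'o set \<Rightarrow> 'p set \<Rightarrow> ('p \<Rightarrow> 'p \<Rightarrow> 'm set) \<Rightarrow> ('p \<Rightarrow> 'o) \<Rightarrow> 'o \<Rightarrow> 'p set set" where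
  "S_fam hom Obfin Obs homs U F =
     {Nbhd Obs homs U F e \<A> | \<A> e. \<A> \<in> Obs \<and> U \<A> \<in> Obfin \<and> e \<in> hom (U \<A>) F}"

end

theory Submission
  imports Defs
begin

lemma base_istopology:
  assumes "\<And>B1 B2 x. B1 \<in> S \<Longrightarrow> B2 \<in> S \<Longrightarrow> x \<in> B1 \<inter> B2 \<Longrightarrow> \<exists>B3\<in>S. x \<in> B3 \<and> B3 \<subseteq> B1 \<inter> B2"
  shows "istopology (\<lambda>V. \<exists>\<U>. \<U> \<subseteq> S \<and> V = \<Union>\<U>)"
  unfolding istopology_def
proof (intro conjI allI impI)
  fix V W assume "\<exists>\<U>. \<U> \<subseteq> S \<and> V = \<Union>\<U>" "\<exists>\<U>. \<U> \<subseteq> S \<and> W = \<Union>\<U>"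
  then obtain U1 U2 where u: "U1 \<subseteq> S" "V = \<Union>U1" "U2 \<subseteq> S" "W = \<Union>U2" by blast
  have "V \<inter> W = \<Union>{B\<in>S. B \<subseteq> V \<inter> W}"
  proof
    show "V \<inter> W \<subseteq> \<Union>{B\<in>S. B \<subseteq> V \<inter> W}"
    proof
      fix x assume "x \<in> V \<inter> W"
      then obtain B1 B2 where "B1 \<in> U1" "B2 \<in> U2" "x \<in> B1" "x \<in> B2" using u by blast
      then obtain B3 where "B3 \<in> S" "x \<in> B3" "B3 \<subseteq> B1 \<inter> B2" using assms u by blast
      then show "x \<in> \<Union>{B\<in>S. B \<subseteq> V \<inter> W}" using \<open>B1 \<in> U1\<close> \<open>B2 \<in> U2\<close> u by blast
    qed
  qed blast
  then show "\<exists>\<U>. \<U> \<subseteq> S \<and> V \<inter> W = \<Union>\<U>" by (intro exI[of _ "{B\<in>S. B \<subseteq> V \<inter> W}"]) auto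
next
  fix K assume a: "\<forall>V\<in>K. \<exists>\<U>. \<U> \<subseteq> S \<and> V = \<Union>\<U>"
  have "\<Union>K = \<Union>{B\<in>S. B \<subseteq> \<Union>K}"
  proof
    show "\<Union>K \<subseteq> \<Union>{B\<in>S. B \<subseteq> \<Union>K}"
    proof
      fix x assume "x \<in> \<Union>K"
      then obtain V where "V \<in> K" "x \<in> V" by blast
      then obtain U where "U \<subseteq> S" "V = \<Union>U" using a by blast
      then show "x \<in> \<Union>{B\<in>S. B \<subseteq> \<Union>K}" using \<open>x \<in> V\<close> \<open>V \<in> K\<close> by blast
    qed
  qed blast
  then show "\<exists>\<U>. \<U> \<subseteq> S \<and> \<Union>K = \<Union>\<U>" by (intro exI[of _ "{B\<in>S. B \<subseteq> \<Union>K}"]) auto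
qed

theorem proposition5p7:
  fixes Ob :: "'o set" and hom :: "'o \<Rightarrow> 'o \<Rightarrow> 'm set" and cmp :: "'m \<Rightarrow> 'm \<Rightarrow> 'm"
    and idm :: "'o \<Rightarrow> 'm" and Obfin :: "'o set"
    and Obs :: "'p set" and homs :: "'p \<Rightarrow> 'p \<Rightarrow> 'm set" and U :: "'p \<Rightarrow> 'o" and F :: 'o
  assumes "category Ob hom cmp idm"
    and "fin_conditions Ob hom cmp Obfin"
    and "F \<in> Ob"
    and "locally_finite Ob hom cmp Obfin F"
    and "expansion Ob hom cmp idm Obs homs U"
    and "reasonable hom Obs homs U"
    and "precompact Obfin Obs U"
    and "unique_restrictions hom Obs homs U"
    and "separates_points Ob hom Obfin Obs homs U"
  shows "\<exists>\<sigma> :: 'p topology.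
           topspace \<sigma> = fibre Obs U F \<and>
           (\<forall>V. openin \<sigma> V \<longleftrightarrow> (\<exists>\<U>. \<U> \<subseteq> S_fam hom Obfin Obs homs U F \<and> V = \<Union>\<U>)) \<and>
           (\<forall>S\<in>S_fam hom Obfin Obs homs U F. openin \<sigma> S \<and> closedin \<sigma> S) \<and>
           Hausdorff_space \<sigma>"
proof -
  define S where "S = S_fam hom Obfin Obs homs U F"
  define N where "N = Nbhd Obs homs U F"
  define R where "R = restr Obs homs U"
  have catS: "category Obs homs cmp (\<lambda>\<A>. idm (U \<A>))" and homsub: "\<And>\<A> \<B>. homs \<A> \<B> \<subseteq> hom (U \<A>) (U \<B>)"
    using assms(5) unfolding expansion_def by auto
  have comp: "\<And>f g a b c. f \<in> homs a b \<Longrightarrow> g \<in> homs b c \<Longrightarrow> cmp g f \<in> homs a c"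
    using catS unfolding category_def by blast
  have homsObs: "\<And>a b f. f \<in> homs a b \<Longrightarrow> a \<in> Obs \<and> b \<in> Obs"
    using catS unfolding category_def by blast
  have UR: "\<And>\<B> A e. \<B> \<in> Obs \<Longrightarrow> e \<in> hom A (U \<B>) \<Longrightarrow> \<exists>!\<A>. \<A> \<in> fibre Obs U A \<and> e \<in> homs \<A> \<B>"
    using assms(8) unfolding unique_restrictions_def by blast
  have Rprop: "\<And>\<B> A e. \<B> \<in> Obs \<Longrightarrow> e \<in> hom A (U \<B>) \<Longrightarrow> R A \<B> e \<in> fibre Obs U A \<and> e \<in> homs (R A \<B> e) \<B>"
    unfolding R_def restr_def by (rule theI', rule UR)
  have Runiq: "\<And>\<B> A e \<A>1 \<A>2. \<B> \<in> Obs \<Longrightarrow> \<A>1 \<in> fibre Obs U A \<Longrightarrow> \<A>2 \<in> fibre Obs U A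
      \<Longrightarrow> e \<in> homs \<A>1 \<B> \<Longrightarrow> e \<in> homs \<A>2 \<B> \<Longrightarrow> \<A>1 = \<A>2"
  proof -
    fix \<B> A e \<A>1 \<A>2 assume h: "\<B> \<in> Obs" "\<A>1 \<in> fibre Obs U A" "\<A>2 \<in> fibre Obs U A"
      "e \<in> homs \<A>1 \<B>" "e \<in> homs \<A>2 \<B>"
    have "e \<in> hom A (U \<B>)" using h homsub unfolding fibre_def by blast
    then show "\<A>1 = \<A>2" using UR[OF h(1)] h by blast
  qed
  have Ssub: "\<And>X. X \<in> S \<Longrightarrow> X \<subseteq> fibre Obs U F"
    unfolding S_def S_fam_def Nbhd_def by blast
  have Sform: "\<And>X. X \<in> S \<longleftrightarrow> (\<exists>\<A> e. X = N e \<A> \<and> \<A> \<in> Obs \<and> U \<A> \<in> Obfin \<and> e \<in> hom (U \<A>) F)"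
    unfolding S_def S_fam_def N_def by blast
  have Sintro: "\<And>\<A> e. \<A> \<in> Obs \<Longrightarrow> U \<A> \<in> Obfin \<Longrightarrow> e \<in> hom (U \<A>) F \<Longrightarrow> N e \<A> \<in> S"
    unfolding S_def S_fam_def N_def by blast
  have Nmem: "\<And>x e \<A>. x \<in> N e \<A> \<longleftrightarrow> x \<in> fibre Obs U F \<and> e \<in> homs \<A> x"
    unfolding N_def Nbhd_def by blast
  have Ndisj: "\<And>e \<A>1 \<A>2 A. \<A>1 \<in> fibre Obs U A \<Longrightarrow> \<A>2 \<in> fibre Obs U A \<Longrightarrow> \<A>1 \<noteq> \<A>2
      \<Longrightarrow> N e \<A>1 \<inter> N e \<A>2 = {}"
    using Runiq Nmem unfolding fibre_def by blast
  have cover: "\<And>x. x \<in> fibre Obs U F \<Longrightarrow> \<exists>X\<in>S. x \<in> X"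
  proof -
    fix x assume x: "x \<in> fibre Obs U F"
    then have xo: "x \<in> Obs" "U x = F" unfolding fibre_def by auto
    obtain A e where A: "A \<in> Obfin" "e \<in> hom A F"
      using assms(2,3) unfolding fin_conditions_def by blast
    have P: "R A x e \<in> fibre Obs U A \<and> e \<in> homs (R A x e) x" using Rprop[OF xo(1)] A xo by simp
    then have "N e (R A x e) \<in> S" using A by (intro Sintro) (auto simp: fibre_def)
    moreover have "x \<in> N e (R A x e)" using P x Nmem by blast
    ultimately show "\<exists>X\<in>S. x \<in> X" by blast
  qed
  have inter: "\<And>B1 B2 x. B1 \<in> S \<Longrightarrow> B2 \<in> S \<Longrightarrow> x \<in> B1 \<inter> B2 \<Longrightarrow> \<exists>B3\<in>S. x \<in> B3 \<and> B3 \<subseteq> B1 \<inter> B2"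
  proof -
    fix B1 B2 x assume b: "B1 \<in> S" "B2 \<in> S" "x \<in> B1 \<inter> B2"
    obtain \<A> e where a: "B1 = N e \<A>" "\<A> \<in> Obs" "U \<A> \<in> Obfin" "e \<in> hom (U \<A>) F" using b Sform by blast
    obtain \<B> f where bb: "B2 = N f \<B>" "\<B> \<in> Obs" "U \<B> \<in> Obfin" "f \<in> hom (U \<B>) F" using b Sform by blast
    have x: "x \<in> fibre Obs U F" "e \<in> homs \<A> x" "f \<in> homs \<B> x" using b a bb Nmem by auto
    then have xo: "x \<in> Obs" "U x = F" unfolding fibre_def by auto
    obtain D r p q where D: "D \<in> Obfin" "r \<in> hom D F" "p \<in> hom (U \<A>) D" "q \<in> hom (U \<B>) D"
      "cmp r p = e" "cmp r q = f"
      using assms(4) a bb unfolding locally_finite_def by meson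
    define \<D> where "\<D> = R D x r"
    have Dp: "\<D> \<in> fibre Obs U D" "r \<in> homs \<D> x" using Rprop[OF xo(1)] D xo unfolding \<D>_def by auto
    have DO: "\<D> \<in> Obs" "U \<D> = D" using Dp unfolding fibre_def by auto
    have pA: "p \<in> homs \<A> \<D>"
    proof -
      have P: "R (U \<A>) \<D> p \<in> fibre Obs U (U \<A>) \<and> p \<in> homs (R (U \<A>) \<D> p) \<D>"
        using Rprop[OF DO(1)] D DO by simp
      then have "e \<in> homs (R (U \<A>) \<D> p) x" using comp Dp D by metis
      then have "R (U \<A>) \<D> p = \<A>" using Runiq[OF xo(1)] P x a unfolding fibre_def by blast
      then show ?thesis using P by simp
    qed
    have qB: "q \<in> homs \<B> \<D>"
    proof -
      have P: "R (U \<B>) \<D> q \<in> fibre Obs U (U \<B>) \<and> q \<in> homs (R (U \<B>) \<D> q) \<D>"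
        using Rprop[OF DO(1)] D DO by simp
      then have "f \<in> homs (R (U \<B>) \<D> q) x" using comp Dp D by metis
      then have "R (U \<B>) \<D> q = \<B>" using Runiq[OF xo(1)] P x bb unfolding fibre_def by blast
      then show ?thesis using P by simp
    qed
    have "N r \<D> \<in> S" using DO D by (intro Sintro) auto
    moreover have "x \<in> N r \<D>" using Nmem x Dp by blast
    moreover have "N r \<D> \<subseteq> B1 \<inter> B2"
    proof
      fix y assume "y \<in> N r \<D>"
      then have y: "y \<in> fibre Obs U F" "r \<in> homs \<D> y" using Nmem by auto
      have "e \<in> homs \<A> y" using comp[OF pA y(2)] D(5) by simp
      moreover have "f \<in> homs \<B> y" using comp[OF qB y(2)] D(6) by simp
      ultimately show "y \<in> B1 \<inter> B2" using y(1) a(1) bb(1) Nmem by blast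
    qed
    ultimately show "\<exists>B3\<in>S. x \<in> B3 \<and> B3 \<subseteq> B1 \<inter> B2" by blast
  qed
  define \<sigma> where "\<sigma> = topology (\<lambda>V. \<exists>\<U>. \<U> \<subseteq> S \<and> V = \<Union>\<U>)"
  have op: "\<And>V. openin \<sigma> V \<longleftrightarrow> (\<exists>\<U>. \<U> \<subseteq> S \<and> V = \<Union>\<U>)"
    unfolding \<sigma>_def using base_istopology[OF inter] by simp
  have Sopen: "\<And>X. X \<in> S \<Longrightarrow> openin \<sigma> X"
    unfolding op by (rule_tac x="{X}" in exI) auto
  have top: "topspace \<sigma> = fibre Obs U F"
  proof
    show "topspace \<sigma> \<subseteq> fibre Obs U F" unfolding topspace_def op using Ssub by blast
    show "fibre Obs U F \<subseteq> topspace \<sigma>" using cover Sopen openin_subset by blast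
  qed
  have clo: "\<And>X. X \<in> S \<Longrightarrow> closedin \<sigma> X"
  proof -
    fix X assume X: "X \<in> S"
    obtain \<A> e where a: "X = N e \<A>" "\<A> \<in> Obs" "U \<A> \<in> Obfin" "e \<in> hom (U \<A>) F" using X Sform by blast
    have "fibre Obs U F - X = \<Union>{N e \<A>' | \<A>'. \<A>' \<in> fibre Obs U (U \<A>) \<and> \<A>' \<noteq> \<A>}"
    proof
      show "fibre Obs U F - X \<subseteq> \<Union>{N e \<A>' | \<A>'. \<A>' \<in> fibre Obs U (U \<A>) \<and> \<A>' \<noteq> \<A>}"
      proof
        fix x assume x: "x \<in> fibre Obs U F - X"
        then have xo: "x \<in> Obs" "U x = F" unfolding fibre_def by auto
        have P: "R (U \<A>) x e \<in> fibre Obs U (U \<A>) \<and> e \<in> homs (R (U \<A>) x e) x"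
          using Rprop[OF xo(1)] a xo by simp
        then have "R (U \<A>) x e \<noteq> \<A>" using x a Nmem by auto
        moreover have "x \<in> N e (R (U \<A>) x e)" using P x Nmem by auto
        ultimately show "x \<in> \<Union>{N e \<A>' | \<A>'. \<A>' \<in> fibre Obs U (U \<A>) \<and> \<A>' \<noteq> \<A>}" using P by blast
      qed
      show "\<Union>{N e \<A>' | \<A>'. \<A>' \<in> fibre Obs U (U \<A>) \<and> \<A>' \<noteq> \<A>} \<subseteq> fibre Obs U F - X"
      proof -
        have af: "\<A> \<in> fibre Obs U (U \<A>)" using a unfolding fibre_def by simp
        show ?thesis using Ndisj[OF _ af] Nmem a(1) by blast
      qed
    qed
    moreover have "{N e \<A>' | \<A>'. \<A>' \<in> fibre Obs U (U \<A>) \<and> \<A>' \<noteq> \<A>} \<subseteq> S"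
      using a unfolding fibre_def by (auto intro!: Sintro)
    ultimately have "openin \<sigma> (topspace \<sigma> - X)" unfolding top op by blast
    then show "closedin \<sigma> X" unfolding closedin_def using Ssub[OF X] top by simp
  qed
  have haus: "Hausdorff_space \<sigma>"
    unfolding Hausdorff_space_def top
  proof (intro allI impI)
    fix x y assume h: "x \<in> fibre Obs U F \<and> y \<in> fibre Obs U F \<and> x \<noteq> y"
    then obtain A e where A: "A \<in> Obfin" "e \<in> hom A F" "R A x e \<noteq> R A y e"
      using assms(3,9) unfolding separates_points_def R_def by blast
    have xo: "x \<in> Obs" "U x = F" "y \<in> Obs" "U y = F" using h unfolding fibre_def by auto
    have Px: "R A x e \<in> fibre Obs U A \<and> e \<in> homs (R A x e) x" using Rprop[OF xo(1)] A xo by simp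
    have Py: "R A y e \<in> fibre Obs U A \<and> e \<in> homs (R A y e) y" using Rprop[OF xo(3)] A xo by simp
    have fin: "U (R A x e) \<in> Obfin" "U (R A y e) \<in> Obfin" "R A x e \<in> Obs" "R A y e \<in> Obs"
      using Px Py A unfolding fibre_def by auto
    have "N e (R A x e) \<in> S" "N e (R A y e) \<in> S"
      using fin Px Py A unfolding fibre_def by (auto intro!: Sintro)
    moreover have "x \<in> N e (R A x e)" "y \<in> N e (R A y e)" using Px Py h Nmem by auto
    moreover have "disjnt (N e (R A x e)) (N e (R A y e))"
      using Ndisj Px Py A unfolding disjnt_def by blast
    ultimately show "\<exists>U V. openin \<sigma> U \<and> openin \<sigma> V \<and> x \<in> U \<and> y \<in> V \<and> disjnt U V"
      using Sopen by blast
  qed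
  have "topspace \<sigma> = fibre Obs U F \<and>
           (\<forall>V. openin \<sigma> V \<longleftrightarrow> (\<exists>\<U>. \<U> \<subseteq> S \<and> V = \<Union>\<U>)) \<and>
           (\<forall>X\<in>S. openin \<sigma> X \<and> closedin \<sigma> X) \<and>
           Hausdorff_space \<sigma>"
    using top op Sopen clo haus by (intro conjI allI ballI) simp_all
  then show ?thesis unfolding S_def by (rule exI[of _ \<sigma>])
qed

end
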